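(* Let $G=Z_{2^{\lambda_1}}\times\cdots\times Z_{2^{\lambda_n}}$ with $\lambda_1\le\cdots\le\lambda_n$. The lattice of characteristic subgroups of $G$ is distributive if and only if every characteristic subgroup of $G$ is regular.
   Context: Tuples are ordered componentwise; for $\mathbf a$ with $\mathbf 0\le\mathbf a\le(\lambda_1,\dots,\lambda_n)$, $T(\mathbf a)$ is the set of $(g_1,\dots,g_n)\in G$ with $|g_i|=2^{a_i}$ for all $i$, and $R(\mathbf a)=\bigcup_{\mathbf b\le\mathbf a}T(\mathbf b)$. A subgroup is regular if it equals $R(\mathbf a)$ for some such tuple $\mathbf a$. *)

theory Defs
  imports "HOL-Algebra.Algebra"
begin

text \<open>The group G = Z_{2^lam_0} x ... x Z_{2^lam_(n-1)} (indices shifted to 0..n-1),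
  as the product of the additive groups of integers modulo 2^lam_i.\<close>
definition cyc2 :: "(nat \<Rightarrow> nat) \<Rightarrow> nat \<Rightarrow> int monoid" where
  "cyc2 lam i = integer_mod_group (2 ^ lam i)"

definition Gtuple :: "nat \<Rightarrow> (nat \<Rightarrow> nat) \<Rightarrow> (nat \<Rightarrow> int) monoid" where
  "Gtuple n lam = product_group {0..<n} (cyc2 lam)"

definition Tset :: "nat \<Rightarrow> (nat \<Rightarrow> nat) \<Rightarrow> (nat \<Rightarrow> nat) \<Rightarrow> (nat \<Rightarrow> int) set" where
  "Tset n lam a = {g \<in> carrier (Gtuple n lam).
      \<forall>i<n. group.ord (cyc2 lam i) (g i) = 2 ^ a i}"

definition Rset :: "nat \<Rightarrow> (nat \<Rightarrow> nat) \<Rightarrow> (nat \<Rightarrow> nat) \<Rightarrow> (nat \<Rightarrow> int) set" where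
  "Rset n lam a = \<Union> {Tset n lam b | b. \<forall>i<n. b i \<le> a i}"

definition regular_subgroup :: "nat \<Rightarrow> (nat \<Rightarrow> nat) \<Rightarrow> (nat \<Rightarrow> int) set \<Rightarrow> bool" where
  "regular_subgroup n lam H \<longleftrightarrow>
     (\<exists>a. (\<forall>i<n. a i \<le> lam i) \<and> H = Rset n lam a)"

definition characteristic :: "'a set \<Rightarrow> ('a, 'b) monoid_scheme \<Rightarrow> bool" where
  "characteristic H G \<longleftrightarrow> subgroup H G \<and> (\<forall>\<phi>\<in>auto G. \<phi> ` H = H)"

definition char_lattice_distributive :: "('a, 'b) monoid_scheme \<Rightarrow> bool" where
  "char_lattice_distributive G \<longleftrightarrow>
     (\<forall>A B C. characteristic A G \<and> characteristic B G \<and> characteristic C G \<longrightarrow>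
        A \<inter> generate G (B \<union> C) = generate G ((A \<inter> B) \<union> (A \<inter> C)))"

end

theory Submission
  imports Defs
begin


lemma cyc2_carrier: "carrier (cyc2 lam i) = {0..<2 ^ lam i}"
  by (simp add: cyc2_def carrier_integer_mod_group)

lemma cyc2_mult: "x \<otimes>\<^bsub>cyc2 lam i\<^esub> y = (x + y) mod 2 ^ lam i"
  by (simp add: cyc2_def)

lemma cyc2_one: "\<one>\<^bsub>cyc2 lam i\<^esub> = 0"
  by (simp add: cyc2_def)

lemma cyc2_group: "group (cyc2 lam i)"
  by (simp add: cyc2_def)

lemma cyc2_pow: "x [^]\<^bsub>cyc2 lam i\<^esub> (k::nat) = (int k * x) mod 2 ^ lam i"
  by (simp add: cyc2_def)

lemma cyc2_inv: "x \<in> carrier (cyc2 lam i) \<Longrightarrow> inv\<^bsub>cyc2 lam i\<^esub> x = (- x) mod 2 ^ lam i"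
  by (simp add: cyc2_def)

lemma G_carrier: "carrier (Gtuple n lam) = (\<Pi>\<^sub>E i\<in>{0..<n}. {0..<2 ^ lam i})"
  by (simp add: Gtuple_def cyc2_carrier)

lemma G_mult: "x \<otimes>\<^bsub>Gtuple n lam\<^esub> y = (\<lambda>i\<in>{0..<n}. (x i + y i) mod 2 ^ lam i)"
  by (simp add: Gtuple_def cyc2_mult)

lemma G_one: "\<one>\<^bsub>Gtuple n lam\<^esub> = (\<lambda>i\<in>{0..<n}. 0)"
  by (simp add: Gtuple_def cyc2_one)

lemma G_group: "group (Gtuple n lam)"
  by (simp add: Gtuple_def cyc2_group)

lemma G_comm: "comm_group (Gtuple n lam)"
proof -
  interpret group "Gtuple n lam" by (rule G_group)
  show ?thesis
  proof (rule group_comm_groupI)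
    fix x y assume "x \<in> carrier (Gtuple n lam)" "y \<in> carrier (Gtuple n lam)"
    show "x \<otimes>\<^bsub>Gtuple n lam\<^esub> y = y \<otimes>\<^bsub>Gtuple n lam\<^esub> x"
      by (simp add: G_mult add.commute)
  qed
qed

lemma G_inv: "x \<in> carrier (Gtuple n lam) \<Longrightarrow>
   inv\<^bsub>Gtuple n lam\<^esub> x = (\<lambda>i\<in>{0..<n}. (- x i) mod 2 ^ lam i)"
  unfolding Gtuple_def
  apply (subst inv_product_group)
    apply (auto simp: Gtuple_def cyc2_group cyc2_carrier intro!: restrict_ext)
  apply (subst cyc2_inv)
   apply (auto simp: cyc2_carrier PiE_iff)
  done

lemma G_pow: "x \<in> carrier (Gtuple n lam) \<Longrightarrow>
   x [^]\<^bsub>Gtuple n lam\<^esub> (k::nat) = (\<lambda>i\<in>{0..<n}. (int k * x i) mod 2 ^ lam i)"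
proof (induction k)
  case 0
  then show ?case by (simp add: G_one)
next
  case (Suc k)
  have "x [^]\<^bsub>Gtuple n lam\<^esub> Suc k = x [^]\<^bsub>Gtuple n lam\<^esub> k \<otimes>\<^bsub>Gtuple n lam\<^esub> x"
    by (simp add: nat_pow_Suc)
  also have "\<dots> = (\<lambda>i\<in>{0..<n}. (int (Suc k) * x i) mod 2 ^ lam i)"
    using Suc.prems unfolding Suc.IH[OF Suc.prems] G_mult G_carrier
    by (intro restrict_ext) (auto simp: PiE_iff mod_add_right_eq algebra_simps)
  finally show ?case .
qed

lemma G_finite: "finite (carrier (Gtuple n lam))"
  by (simp add: G_carrier finite_PiE)


definition Ok :: "(nat \<Rightarrow> nat) \<Rightarrow> nat \<Rightarrow> nat \<Rightarrow> int \<Rightarrow> bool" where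
  "Ok lam i t y \<longleftrightarrow> (2::int) ^ lam i dvd 2 ^ t * y"

definition low :: "nat \<Rightarrow> (nat \<Rightarrow> nat) \<Rightarrow> (nat \<Rightarrow> nat) \<Rightarrow> (nat \<Rightarrow> int) set" where
  "low n lam a = {g \<in> carrier (Gtuple n lam). \<forall>i<n. Ok lam i (a i) (g i)}"

lemma Ok_mono: "Ok lam i s y \<Longrightarrow> s \<le> t \<Longrightarrow> Ok lam i t y"
proof -
  assume a: "Ok lam i s y" "s \<le> t"
  have "(2::int) ^ t * y = 2 ^ (t - s) * (2 ^ s * y)"
    using a(2) by (simp add: power_add[symmetric])
  moreover have "(2::int) ^ lam i dvd 2 ^ (t - s) * (2 ^ s * y)"
    using a(1) unfolding Ok_def by (rule dvd_mult)
  ultimately show ?thesis unfolding Ok_def by metis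
qed

lemma Ok_mod: "Ok lam i t (y mod 2 ^ lam i) \<longleftrightarrow> Ok lam i t y"
  unfolding Ok_def by (simp add: dvd_eq_mod_eq_0 mod_mult_right_eq)

lemma Ok_add: "Ok lam i t x \<Longrightarrow> Ok lam i t y \<Longrightarrow> Ok lam i t (x + y)"
  unfolding Ok_def by (simp add: distrib_left)

lemma Ok_neg: "Ok lam i t x \<Longrightarrow> Ok lam i t (- x)"
  unfolding Ok_def by simp

lemma Ok_0[simp]: "Ok lam i t 0"
  unfolding Ok_def by simp

lemma Ok_big: "lam i \<le> t \<Longrightarrow> Ok lam i t y"
  unfolding Ok_def by (simp add: le_imp_power_dvd)

lemma Ok_zero_iff: "0 \<le> y \<Longrightarrow> y < 2 ^ lam i \<Longrightarrow> Ok lam i 0 y \<longleftrightarrow> y = 0"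
proof
  assume a: "0 \<le> y" "y < 2 ^ lam i"
  assume "Ok lam i 0 y"
  then have d: "(2::int) ^ lam i dvd y" by (simp add: Ok_def)
  show "y = 0"
  proof (rule ccontr)
    assume "y \<noteq> 0"
    then have "0 < y" using a by simp
    then have "2 ^ lam i \<le> y" using d zdvd_imp_le by blast
    then show False using a by simp
  qed
next
  assume "y = 0" then show "Ok lam i 0 y" by simp
qed

lemma ord_dvd_Ok:
  assumes "y \<in> carrier (cyc2 lam i)"
  shows "group.ord (cyc2 lam i) y dvd 2 ^ t \<longleftrightarrow> Ok lam i t y"
proof -
  interpret group "cyc2 lam i" by (rule cyc2_group)
  have "y [^]\<^bsub>cyc2 lam i\<^esub> ((2::nat) ^ t) = \<one>\<^bsub>cyc2 lam i\<^esub> \<longleftrightarrow> ord y dvd 2 ^ t"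
    using pow_eq_id[OF assms] .
  moreover have "y [^]\<^bsub>cyc2 lam i\<^esub> ((2::nat) ^ t) = (2 ^ t * y) mod 2 ^ lam i"
    by (simp add: cyc2_pow)
  ultimately show ?thesis
    by (simp add: cyc2_one Ok_def dvd_eq_mod_eq_0)
qed

lemma Rset_low: "Rset n lam a = low n lam a"
proof
  show "Rset n lam a \<subseteq> low n lam a"
  proof
    fix g assume "g \<in> Rset n lam a"
    then obtain b where b: "\<forall>i<n. b i \<le> a i" "g \<in> Tset n lam b"
      unfolding Rset_def by blast
    then have gc: "g \<in> carrier (Gtuple n lam)" and o: "\<forall>i<n. group.ord (cyc2 lam i) (g i) = 2 ^ b i"
      unfolding Tset_def by auto
    have "Ok lam i (a i) (g i)" if "i < n" for i
    proof -
      have "g i \<in> carrier (cyc2 lam i)" using gc that by (auto simp: G_carrier cyc2_carrier PiE_iff)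
      moreover have "group.ord (cyc2 lam i) (g i) dvd 2 ^ a i"
        using o b(1) that by (simp add: le_imp_power_dvd)
      ultimately show ?thesis using ord_dvd_Ok by blast
    qed
    then show "g \<in> low n lam a" using gc by (simp add: low_def)
  qed
next
  show "low n lam a \<subseteq> Rset n lam a"
  proof
    fix g assume g: "g \<in> low n lam a"
    then have gc: "g \<in> carrier (Gtuple n lam)" by (simp add: low_def)
    have "\<exists>b. b \<le> a i \<and> group.ord (cyc2 lam i) (g i) = 2 ^ b" if "i < n" for i
    proof -
      have "g i \<in> carrier (cyc2 lam i)" using gc that by (auto simp: G_carrier cyc2_carrier PiE_iff)
      then have "group.ord (cyc2 lam i) (g i) dvd 2 ^ a i"
        using ord_dvd_Ok g that by (auto simp: low_def)
      then show ?thesis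
        using divides_primepow_nat[of 2] by auto
    qed
    then have "\<forall>i. \<exists>b. i < n \<longrightarrow> b \<le> a i \<and> group.ord (cyc2 lam i) (g i) = 2 ^ b"
      by blast
    then obtain b where b: "\<forall>i. i < n \<longrightarrow> b i \<le> a i \<and> group.ord (cyc2 lam i) (g i) = 2 ^ b i"
      by (rule choice_iff[THEN iffD1, elim_format]) blast
    then have "g \<in> Tset n lam b" using gc by (simp add: Tset_def)
    then show "g \<in> Rset n lam a" using b unfolding Rset_def by blast
  qed
qed

lemma low_min: "low n lam a = low n lam (\<lambda>i. min (a i) (lam i))"
  unfolding low_def
  by (auto simp: min_def Ok_big) (metis Ok_big nat_le_linear)

lemma regular_iff: "regular_subgroup n lam H \<longleftrightarrow> (\<exists>a. H = low n lam a)"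
proof
  assume "regular_subgroup n lam H" then show "\<exists>a. H = low n lam a"
    by (auto simp: regular_subgroup_def Rset_low)
next
  assume "\<exists>a. H = low n lam a"
  then obtain a where "H = low n lam a" by blast
  then show "regular_subgroup n lam H"
    unfolding regular_subgroup_def Rset_low
    by (intro exI[of _ "\<lambda>i. min (a i) (lam i)"]) (simp add: low_min[symmetric])
qed


lemma mod_range: "0 \<le> (x::int) mod 2 ^ k" "(x::int) mod 2 ^ k < 2 ^ k"
  by simp_all

lemma G_carrierI: "(\<And>i. i < n \<Longrightarrow> 0 \<le> f i \<and> f i < 2 ^ lam i) \<Longrightarrow>
  (\<lambda>i\<in>{0..<n}. f i) \<in> carrier (Gtuple n lam)"
  by (simp add: G_carrier restrict_PiE_iff)

lemma G_carrierD: "g \<in> carrier (Gtuple n lam) \<Longrightarrow> i < n \<Longrightarrow> 0 \<le> g i \<and> g i < 2 ^ lam i"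
proof -
  assume "g \<in> carrier (Gtuple n lam)" "i < n"
  then have "g i \<in> {0..<2 ^ lam i}" unfolding G_carrier by (intro PiE_mem[of g "{0..<n}"]) auto
  then show ?thesis by simp
qed


lemma G_mod: "g \<in> carrier (Gtuple n lam) \<Longrightarrow> i < n \<Longrightarrow> g i mod 2 ^ lam i = g i"
  using G_carrierD[of g n lam i] by simp

lemma G_eqI:
  assumes "g \<in> carrier (Gtuple n lam)" "h \<in> carrier (Gtuple n lam)" "\<And>i. i < n \<Longrightarrow> g i = h i"
  shows "g = h"
proof (rule PiE_ext)
  show "g \<in> (\<Pi>\<^sub>E i\<in>{0..<n}. {0..<2 ^ lam i})" using assms(1) by (simp add: G_carrier)
  show "h \<in> (\<Pi>\<^sub>E i\<in>{0..<n}. {0..<2 ^ lam i})" using assms(2) by (simp add: G_carrier)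
  fix i assume "i \<in> {0..<n}" then show "g i = h i" using assms(3) by simp
qed

lemma low_subgroup: "subgroup (low n lam a) (Gtuple n lam)"
proof -
  interpret group "Gtuple n lam" by (rule G_group)
  show ?thesis
  proof (rule subgroupI)
    show "low n lam a \<subseteq> carrier (Gtuple n lam)" by (auto simp: low_def)
    have "\<one>\<^bsub>Gtuple n lam\<^esub> \<in> low n lam a"
      unfolding low_def G_one by (auto intro: G_carrierI)
    then show "low n lam a \<noteq> {}" by blast
    fix x y assume x: "x \<in> low n lam a" and y: "y \<in> low n lam a"
    have xc: "x \<in> carrier (Gtuple n lam)" "\<forall>i<n. Ok lam i (a i) (x i)" using x by (auto simp: low_def)
    have yc: "y \<in> carrier (Gtuple n lam)" "\<forall>i<n. Ok lam i (a i) (y i)" using y by (auto simp: low_def)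
    have "(\<lambda>i\<in>{0..<n}. (- x i) mod 2 ^ lam i) \<in> carrier (Gtuple n lam)"
      by (rule G_carrierI) simp
    moreover have "\<forall>i<n. Ok lam i (a i) ((\<lambda>i\<in>{0..<n}. (- x i) mod 2 ^ lam i) i)"
      using xc(2) by (simp add: Ok_mod Ok_neg)
    ultimately show "inv\<^bsub>Gtuple n lam\<^esub> x \<in> low n lam a"
      by (simp add: low_def G_inv[OF xc(1)])
    have "(\<lambda>i\<in>{0..<n}. (x i + y i) mod 2 ^ lam i) \<in> carrier (Gtuple n lam)"
      by (rule G_carrierI) simp
    moreover have "\<forall>i<n. Ok lam i (a i) ((\<lambda>i\<in>{0..<n}. (x i + y i) mod 2 ^ lam i) i)"
      using xc(2) yc(2) by (simp add: Ok_mod Ok_add)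
    ultimately show "x \<otimes>\<^bsub>Gtuple n lam\<^esub> y \<in> low n lam a"
      by (simp add: low_def G_mult)
  qed
qed

definition sg :: "nat \<Rightarrow> nat \<Rightarrow> int \<Rightarrow> (nat \<Rightarrow> int)" where
  "sg n i z = (\<lambda>j\<in>{0..<n}. if j = i then z else 0)"

lemma sg_carrier: "0 \<le> z \<Longrightarrow> z < 2 ^ lam i \<Longrightarrow> sg n i z \<in> carrier (Gtuple n lam)"
  unfolding sg_def by (rule G_carrierI) auto

lemma sg_zero: "sg n i 0 = \<one>\<^bsub>Gtuple n lam\<^esub>"
  by (simp add: sg_def G_one)

lemma sg_pow: "0 \<le> z \<Longrightarrow> z < 2 ^ lam i \<Longrightarrow>
  sg n i z [^]\<^bsub>Gtuple n lam\<^esub> (k::nat) = sg n i ((int k * z) mod 2 ^ lam i)"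
  by (simp add: G_pow sg_carrier) (auto simp: sg_def intro!: restrict_ext)

definition part :: "nat \<Rightarrow> (nat \<Rightarrow> int) \<Rightarrow> nat \<Rightarrow> (nat \<Rightarrow> int)" where
  "part n g p = (\<lambda>j\<in>{0..<n}. if j < p then g j else 0)"

lemma part_0: "part n g 0 = \<one>\<^bsub>Gtuple n lam\<^esub>"
  by (simp add: part_def G_one)

lemma part_n: "g \<in> carrier (Gtuple n lam) \<Longrightarrow> part n g n = g"
  by (rule G_eqI[of _ n lam]) (auto simp: part_def intro!: G_carrierI dest: G_carrierD)

lemma part_carrier: "g \<in> carrier (Gtuple n lam) \<Longrightarrow> part n g p \<in> carrier (Gtuple n lam)"
  unfolding part_def by (rule G_carrierI) (auto dest: G_carrierD)

lemma part_Suc: "g \<in> carrier (Gtuple n lam) \<Longrightarrow> p < n \<Longrightarrow>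
   part n g (Suc p) = part n g p \<otimes>\<^bsub>Gtuple n lam\<^esub> sg n p (g p)"
  by (auto simp: part_def sg_def G_mult G_mod intro!: restrict_ext)

lemma decomp_hom:
  assumes g: "g \<in> carrier (Gtuple n lam)" and K: "subgroup K (Gtuple n lam)"
    and f: "f \<in> hom (Gtuple n lam) (Gtuple n lam)"
    and parts: "\<And>p. p < n \<Longrightarrow> f (sg n p (g p)) \<in> K"
  shows "f g \<in> K"
proof -
  interpret group "Gtuple n lam" by (rule G_group)
  have "p \<le> n \<Longrightarrow> f (part n g p) \<in> K" for p
  proof (induction p)
    case 0
    have "f \<one>\<^bsub>Gtuple n lam\<^esub> = \<one>\<^bsub>Gtuple n lam\<^esub>"
      using f by (simp add: hom_one G_group)
    then show ?case using K by (simp add: part_0[of n g lam] subgroup.one_closed)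
  next
    case (Suc p)
    have sgc: "sg n p (g p) \<in> carrier (Gtuple n lam)"
      using G_carrierD[OF g, of p] Suc.prems by (intro sg_carrier) auto
    have "f (part n g (Suc p)) = f (part n g p) \<otimes>\<^bsub>Gtuple n lam\<^esub> f (sg n p (g p))"
      using Suc.prems g by (simp add: part_Suc hom_mult[OF f] part_carrier sgc)
    then show ?case using Suc K parts by (simp add: subgroup.m_closed)
  qed
  then show ?thesis using part_n[OF g] by (metis order_refl)
qed

lemma id_hom: "(\<lambda>x. x) \<in> hom (Gtuple n lam) (Gtuple n lam)"
  by (rule homI) auto

lemma decomp:
  assumes g: "g \<in> carrier (Gtuple n lam)" and K: "subgroup K (Gtuple n lam)"
    and parts: "\<And>p. p < n \<Longrightarrow> sg n p (g p) \<in> K"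
  shows "g \<in> K"
  using decomp_hom[OF g K id_hom] parts by simp


lemma Ok_min: "Ok lam i (min s t) y \<longleftrightarrow> Ok lam i s y \<and> Ok lam i t y"
proof
  assume h: "Ok lam i (min s t) y"
  show "Ok lam i s y \<and> Ok lam i t y"
    using Ok_mono[OF h, of s] Ok_mono[OF h, of t] by simp
next
  assume "Ok lam i s y \<and> Ok lam i t y"
  then show "Ok lam i (min s t) y" by (cases "s \<le> t") (simp_all add: min_def)
qed

lemma Ok_max: "Ok lam i s y \<or> Ok lam i t y \<Longrightarrow> Ok lam i (max s t) y"
proof (elim disjE)
  assume "Ok lam i s y" then show ?thesis by (rule Ok_mono) simp
next
  assume "Ok lam i t y" then show ?thesis by (rule Ok_mono) simp
qed

lemma low_inter: "low n lam a \<inter> low n lam b = low n lam (\<lambda>i. min (a i) (b i))"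
  unfolding low_def Ok_min by auto

lemma gen_low: "generate (Gtuple n lam) (low n lam b \<union> low n lam c) = low n lam (\<lambda>i. max (b i) (c i))"
proof
  interpret group "Gtuple n lam" by (rule G_group)
  show "generate (Gtuple n lam) (low n lam b \<union> low n lam c) \<subseteq> low n lam (\<lambda>i. max (b i) (c i))"
    by (rule generate_subgroup_incl[OF _ low_subgroup]) (auto simp: low_def intro: Ok_max)
  show "low n lam (\<lambda>i. max (b i) (c i)) \<subseteq> generate (Gtuple n lam) (low n lam b \<union> low n lam c)"
  proof
    fix g assume g: "g \<in> low n lam (\<lambda>i. max (b i) (c i))"
    then have gc: "g \<in> carrier (Gtuple n lam)" by (simp add: low_def)
    define u where "u = (\<lambda>i\<in>{0..<n}. if c i \<le> b i then g i else 0)"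
    define w where "w = (\<lambda>i\<in>{0..<n}. if c i \<le> b i then 0 else g i)"
    have gok: "\<And>i. i < n \<Longrightarrow> Ok lam i (max (b i) (c i)) (g i)" using g by (simp add: low_def)
    have u: "u \<in> low n lam b"
    proof -
      have "u \<in> carrier (Gtuple n lam)" unfolding u_def
        by (rule G_carrierI) (simp add: G_carrierD[OF gc])
      moreover have "Ok lam i (b i) (u i)" if "i < n" for i
        using gok[OF that] that by (cases "c i \<le> b i") (simp_all add: u_def max_def)
      ultimately show ?thesis by (simp add: low_def)
    qed
    have w: "w \<in> low n lam c"
    proof -
      have "w \<in> carrier (Gtuple n lam)" unfolding w_def
        by (rule G_carrierI) (simp add: G_carrierD[OF gc])
      moreover have "Ok lam i (c i) (w i)" if "i < n" for i
        using gok[OF that] that by (cases "c i \<le> b i") (simp_all add: w_def max_def)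
      ultimately show ?thesis by (simp add: low_def)
    qed
    have "g = u \<otimes>\<^bsub>Gtuple n lam\<^esub> w"
      unfolding G_mult
    proof (rule G_eqI[OF gc])
      show "(\<lambda>i\<in>{0..<n}. (u i + w i) mod 2 ^ lam i) \<in> carrier (Gtuple n lam)"
        by (rule G_carrierI) simp
      fix i assume "i < n"
      then show "g i = (\<lambda>i\<in>{0..<n}. (u i + w i) mod 2 ^ lam i) i"
        by (simp add: u_def w_def G_mod[OF gc])
    qed
    then show "g \<in> generate (Gtuple n lam) (low n lam b \<union> low n lam c)"
      using u w by (metis UnI1 UnI2 generate.eng generate.incl)
  qed
qed

lemma gen_sub:
  assumes U: "subgroup U (Gtuple n lam)" and V: "subgroup V (Gtuple n lam)"
  shows "generate (Gtuple n lam) (U \<union> V) \<subseteq>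
          {x. \<exists>u\<in>U. \<exists>v\<in>V. x = u \<otimes>\<^bsub>Gtuple n lam\<^esub> v}"
proof -
  interpret comm_group "Gtuple n lam" by (rule G_comm)
  define S where "S = {x. \<exists>u\<in>U. \<exists>v\<in>V. x = u \<otimes>\<^bsub>Gtuple n lam\<^esub> v}"
  have Uc: "U \<subseteq> carrier (Gtuple n lam)" using U by (rule subgroup.subset)
  have Vc: "V \<subseteq> carrier (Gtuple n lam)" using V by (rule subgroup.subset)
  have U1: "\<one>\<^bsub>Gtuple n lam\<^esub> \<in> U" using U by (rule subgroup.one_closed)
  have V1: "\<one>\<^bsub>Gtuple n lam\<^esub> \<in> V" using V by (rule subgroup.one_closed)
  have SI: "u \<otimes>\<^bsub>Gtuple n lam\<^esub> v \<in> S" if "u \<in> U" "v \<in> V" for u v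
    unfolding S_def using that by blast
  have sub: "subgroup S (Gtuple n lam)"
  proof (rule subgroupI)
    show "S \<subseteq> carrier (Gtuple n lam)"
    proof
      fix x assume "x \<in> S"
      then obtain u v where "u \<in> U" "v \<in> V" "x = u \<otimes>\<^bsub>Gtuple n lam\<^esub> v" unfolding S_def by blast
      then show "x \<in> carrier (Gtuple n lam)" using Uc Vc by (simp add: subsetD)
    qed
    show "S \<noteq> {}" using SI[OF U1 V1] by blast
  next
    fix a assume "a \<in> S"
    then obtain u v where uv: "u \<in> U" "v \<in> V" "a = u \<otimes>\<^bsub>Gtuple n lam\<^esub> v" unfolding S_def by blast
    have c: "u \<in> carrier (Gtuple n lam)" "v \<in> carrier (Gtuple n lam)" using uv Uc Vc by (simp_all add: subsetD)
    have "inv\<^bsub>Gtuple n lam\<^esub> a = inv\<^bsub>Gtuple n lam\<^esub> u \<otimes>\<^bsub>Gtuple n lam\<^esub> inv\<^bsub>Gtuple n lam\<^esub> v"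
      using c uv(3) by (simp add: inv_mult)
    moreover have "inv\<^bsub>Gtuple n lam\<^esub> u \<in> U" using U uv(1) by (rule subgroup.m_inv_closed)
    moreover have "inv\<^bsub>Gtuple n lam\<^esub> v \<in> V" using V uv(2) by (rule subgroup.m_inv_closed)
    ultimately show "inv\<^bsub>Gtuple n lam\<^esub> a \<in> S" using SI by simp
  next
    fix a b assume "a \<in> S" "b \<in> S"
    then obtain u v u' v' where uv: "u \<in> U" "v \<in> V" "a = u \<otimes>\<^bsub>Gtuple n lam\<^esub> v"
      "u' \<in> U" "v' \<in> V" "b = u' \<otimes>\<^bsub>Gtuple n lam\<^esub> v'" unfolding S_def by blast
    have c: "u \<in> carrier (Gtuple n lam)" "v \<in> carrier (Gtuple n lam)" "u' \<in> carrier (Gtuple n lam)" "v' \<in> carrier (Gtuple n lam)"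
      using uv Uc Vc by (simp_all add: subsetD)
    have "a \<otimes>\<^bsub>Gtuple n lam\<^esub> b = u \<otimes>\<^bsub>Gtuple n lam\<^esub> (v \<otimes>\<^bsub>Gtuple n lam\<^esub> (u' \<otimes>\<^bsub>Gtuple n lam\<^esub> v'))"
      using c uv(3,6) by (simp add: m_assoc)
    also have "\<dots> = u \<otimes>\<^bsub>Gtuple n lam\<^esub> (u' \<otimes>\<^bsub>Gtuple n lam\<^esub> (v \<otimes>\<^bsub>Gtuple n lam\<^esub> v'))"
      using c by (simp add: m_lcomm)
    also have "\<dots> = (u \<otimes>\<^bsub>Gtuple n lam\<^esub> u') \<otimes>\<^bsub>Gtuple n lam\<^esub> (v \<otimes>\<^bsub>Gtuple n lam\<^esub> v')"
      using c by (simp add: m_assoc)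
    finally have e: "a \<otimes>\<^bsub>Gtuple n lam\<^esub> b = (u \<otimes>\<^bsub>Gtuple n lam\<^esub> u') \<otimes>\<^bsub>Gtuple n lam\<^esub> (v \<otimes>\<^bsub>Gtuple n lam\<^esub> v')" .
    have "u \<otimes>\<^bsub>Gtuple n lam\<^esub> u' \<in> U" using U uv(1,4) by (rule subgroup.m_closed)
    moreover have "v \<otimes>\<^bsub>Gtuple n lam\<^esub> v' \<in> V" using V uv(2,5) by (rule subgroup.m_closed)
    ultimately show "a \<otimes>\<^bsub>Gtuple n lam\<^esub> b \<in> S" unfolding e by (rule SI)
  qed
  have "U \<union> V \<subseteq> S"
  proof
    fix x assume "x \<in> U \<union> V"
    then show "x \<in> S"
    proof
      assume x: "x \<in> U"
      then have "x = x \<otimes>\<^bsub>Gtuple n lam\<^esub> \<one>\<^bsub>Gtuple n lam\<^esub>" using Uc by (simp add: subsetD)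
      then show ?thesis using SI[OF x V1] by simp
    next
      assume x: "x \<in> V"
      then have "x = \<one>\<^bsub>Gtuple n lam\<^esub> \<otimes>\<^bsub>Gtuple n lam\<^esub> x" using Vc by (simp add: subsetD)
      then show ?thesis using SI[OF U1 x] by simp
    qed
  qed
  then show ?thesis unfolding S_def[symmetric] by (rule generate_subgroup_incl[OF _ sub])
qed

lemma dir_regular_distrib:
  assumes "\<forall>H. characteristic H (Gtuple n lam) \<longrightarrow> regular_subgroup n lam H"
  shows "char_lattice_distributive (Gtuple n lam)"
  unfolding char_lattice_distributive_def
proof (intro allI impI)
  fix A B C assume "characteristic A (Gtuple n lam) \<and> characteristic B (Gtuple n lam) \<and> characteristic C (Gtuple n lam)"
  then have "regular_subgroup n lam A" "regular_subgroup n lam B" "regular_subgroup n lam C"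
    using assms by blast+
  then obtain a b c where abc: "A = low n lam a" "B = low n lam b" "C = low n lam c"
    unfolding regular_iff by blast
  have e: "(\<lambda>i. min (a i) (max (b i) (c i))) = (\<lambda>i. max (min (a i) (b i)) (min (a i) (c i)))"
    by (rule ext) (simp add: min_def max_def)
  show "A \<inter> generate (Gtuple n lam) (B \<union> C) = generate (Gtuple n lam) (A \<inter> B \<union> A \<inter> C)"
    unfolding abc gen_low low_inter e ..
qed


definition good :: "nat \<Rightarrow> (nat \<Rightarrow> nat) \<Rightarrow> (nat \<Rightarrow> nat) \<Rightarrow> bool" where
  "good n lam r \<longleftrightarrow> (\<forall>j<n. \<forall>k<n. r j - (lam j - lam k) \<le> r k)"

lemma auto_hom: "\<phi> \<in> auto G \<Longrightarrow> \<phi> \<in> hom G G"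
  by (simp add: auto_def)

lemma auto_bij: "\<phi> \<in> auto G \<Longrightarrow> bij_betw \<phi> (carrier G) (carrier G)"
  by (simp add: auto_def Bij_def)

lemma hom_sg_low:
  assumes good: "good n lam r" and f: "f \<in> hom (Gtuple n lam) (Gtuple n lam)"
    and p: "p < n" and x: "0 \<le> x" "x < 2 ^ lam p" and ok: "Ok lam p (r p) x"
  shows "f (sg n p x) \<in> low n lam r"
proof -
  interpret group "Gtuple n lam" by (rule G_group)
  define s where "s = lam p - r p"
  have "(2::int) ^ s dvd x"
  proof (cases "lam p \<le> r p")
    case True then show ?thesis by (simp add: s_def)
  next
    case False
    then have "(2::int) ^ lam p = 2 ^ r p * 2 ^ s" by (simp add: s_def flip: power_add)
    then have "(2::int) ^ r p * 2 ^ s dvd 2 ^ r p * x" using ok by (simp add: Ok_def)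
    then show ?thesis by simp
  qed
  then obtain w where w: "x = 2 ^ s * w" by (auto elim: dvdE)
  define y where "y = sg n p (w mod 2 ^ lam p)"
  have yc: "y \<in> carrier (Gtuple n lam)" unfolding y_def by (rule sg_carrier) simp_all
  have xc: "sg n p x \<in> carrier (Gtuple n lam)" using x by (rule sg_carrier)
  have "y [^]\<^bsub>Gtuple n lam\<^esub> ((2::nat) ^ s) = sg n p ((2 ^ s * (w mod 2 ^ lam p)) mod 2 ^ lam p)"
    unfolding y_def by (subst sg_pow) simp_all
  also have "\<dots> = sg n p x" using x by (simp add: mod_mult_right_eq w)
  finally have x1: "sg n p x = y [^]\<^bsub>Gtuple n lam\<^esub> ((2::nat) ^ s)" ..
  have "sg n p x [^]\<^bsub>Gtuple n lam\<^esub> ((2::nat) ^ r p) = sg n p ((2 ^ r p * x) mod 2 ^ lam p)"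
    using x by (subst sg_pow) simp_all
  also have "\<dots> = \<one>\<^bsub>Gtuple n lam\<^esub>" using ok by (simp add: Ok_def dvd_eq_mod_eq_0 sg_zero)
  finally have x2: "sg n p x [^]\<^bsub>Gtuple n lam\<^esub> ((2::nat) ^ r p) = \<one>\<^bsub>Gtuple n lam\<^esub>" .
  define q where "q = f y"
  have qc: "q \<in> carrier (Gtuple n lam)" unfolding q_def using f yc by (rule hom_in_carrier)
  have z1: "f (sg n p x) = q [^]\<^bsub>Gtuple n lam\<^esub> ((2::nat) ^ s)"
    unfolding x1 q_def using f yc by (simp add: hom_nat_pow G_group)
  have "f (sg n p x) [^]\<^bsub>Gtuple n lam\<^esub> ((2::nat) ^ r p) = f \<one>\<^bsub>Gtuple n lam\<^esub>"
    using f xc x2 by (metis hom_nat_pow G_group)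
  also have "\<dots> = \<one>\<^bsub>Gtuple n lam\<^esub>" using f by (simp add: hom_one G_group)
  finally have z2: "f (sg n p x) [^]\<^bsub>Gtuple n lam\<^esub> ((2::nat) ^ r p) = \<one>\<^bsub>Gtuple n lam\<^esub>" .
  have zc: "f (sg n p x) \<in> carrier (Gtuple n lam)" using f xc by (rule hom_in_carrier)
  have "Ok lam k (r k) (f (sg n p x) k)" if k: "k < n" for k
  proof -
    have A: "Ok lam k (r p) (f (sg n p x) k)"
    proof -
      have "(\<lambda>i\<in>{0..<n}. (int (2 ^ r p) * f (sg n p x) i) mod 2 ^ lam i) = (\<lambda>i\<in>{0..<n}. 0)"
        using z2 zc by (simp add: G_pow G_one)
      then have "(2 ^ r p * f (sg n p x) k) mod 2 ^ lam k = 0"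
        using k by (metis (no_types, lifting) atLeastLessThan_iff le0 of_nat_numeral of_nat_power restrict_apply')
      then show ?thesis by (simp add: Ok_def dvd_eq_mod_eq_0)
    qed
    have fk: "f (sg n p x) k = (2 ^ s * q k) mod 2 ^ lam k"
      using z1 qc k by (simp add: G_pow)
    have B: "Ok lam k (r k) (f (sg n p x) k)" if "lam k \<le> r k + s"
    proof -
      have "(2::int) ^ lam k dvd 2 ^ (r k + s)" using that by (rule le_imp_power_dvd)
      then have "(2::int) ^ lam k dvd 2 ^ r k * (2 ^ s * q k)"
        by (metis dvd_mult2 mult.assoc power_add)
      then show ?thesis unfolding fk Ok_mod by (simp add: Ok_def)
    qed
    have gd: "r p - (lam p - lam k) \<le> r k" using good p k by (simp add: good_def)
    have "r p \<le> r k \<or> lam k \<le> r k + s"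
      using gd unfolding s_def by arith
    then show ?thesis using A B Ok_mono by blast
  qed
  then show ?thesis using zc by (simp add: low_def)
qed




lemma low_char:
  assumes good: "good n lam r"
  shows "characteristic (low n lam r) (Gtuple n lam)"
  unfolding characteristic_def
proof (intro conjI ballI low_subgroup)
  interpret group "Gtuple n lam" by (rule G_group)
  fix \<phi> assume phi: "\<phi> \<in> auto (Gtuple n lam)"
  have sub: "\<phi> ` low n lam r \<subseteq> low n lam r"
  proof
    fix y assume "y \<in> \<phi> ` low n lam r"
    then obtain g where g: "g \<in> low n lam r" "y = \<phi> g" by blast
    have gc: "g \<in> carrier (Gtuple n lam)" using g by (simp add: low_def)
    have "\<phi> g \<in> low n lam r"
    proof (rule decomp_hom[OF gc low_subgroup auto_hom[OF phi]])
      fix p assume p: "p < n"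
      have "Ok lam p (r p) (g p)" using g p by (simp add: low_def)
      then show "\<phi> (sg n p (g p)) \<in> low n lam r"
        using hom_sg_low[OF good auto_hom[OF phi] p] G_carrierD[OF gc p] by blast
    qed
    then show "y \<in> low n lam r" using g by simp
  qed
  have lc: "low n lam r \<subseteq> carrier (Gtuple n lam)" by (rule subgroup.subset[OF low_subgroup])
  have inj0: "inj_on \<phi> (carrier (Gtuple n lam))" using auto_bij[OF phi] by (rule bij_betw_imp_inj_on)
  have inj: "inj_on \<phi> (low n lam r)" using inj0 lc by (rule inj_on_subset)
  have fin: "finite (low n lam r)" using G_finite lc by (rule finite_subset[rotated])
  have "card (\<phi> ` low n lam r) = card (low n lam r)" using inj by (rule card_image)
  then show "\<phi> ` low n lam r = low n lam r"
    by (rule card_subset_eq[OF fin sub])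
qed

lemma cmod: "(lk::nat) \<le> c + li \<Longrightarrow> ((2::int) ^ c * (a mod 2 ^ li)) mod 2 ^ lk = (2 ^ c * a) mod 2 ^ lk"
proof -
  assume le: "lk \<le> c + li"
  have eq: "(2::int) ^ c * a = 2 ^ c * (a mod 2 ^ li) + 2 ^ (c + li) * (a div 2 ^ li)"
    by (simp add: power_add algebra_simps flip: distrib_left)
  have "(2::int) ^ lk dvd 2 ^ (c + li)" using le by (rule le_imp_power_dvd)
  then obtain q where q: "(2::int) ^ (c + li) = 2 ^ lk * q" by (rule dvdE)
  have "(2 ^ c * a) mod 2 ^ lk = (2 ^ c * (a mod 2 ^ li) + 2 ^ lk * (q * (a div 2 ^ li))) mod (2::int) ^ lk"
    unfolding eq q by (simp add: mult.assoc)
  also have "\<dots> = (2 ^ c * (a mod 2 ^ li)) mod 2 ^ lk"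
    by simp
  finally show ?thesis by simp
qed

definition shear :: "nat \<Rightarrow> (nat \<Rightarrow> nat) \<Rightarrow> nat \<Rightarrow> nat \<Rightarrow> int \<Rightarrow> (nat \<Rightarrow> int) \<Rightarrow> (nat \<Rightarrow> int)" where
  "shear n lam k i e = (\<lambda>g\<in>carrier (Gtuple n lam). (\<lambda>j\<in>{0..<n}. if j = k then (g k + e * 2 ^ (lam k - lam i) * g i) mod 2 ^ lam k else g j))"

lemma shear_carrier: "k < n \<Longrightarrow> g \<in> carrier (Gtuple n lam) \<Longrightarrow> shear n lam k i e g \<in> carrier (Gtuple n lam)"
  unfolding shear_def by (auto intro!: G_carrierI dest: G_carrierD)

lemma cmod2: "(lk::nat) \<le> c + li \<Longrightarrow> (e * 2 ^ c * (a mod 2 ^ li)) mod 2 ^ lk = (e * 2 ^ c * a) mod (2::int) ^ lk"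
proof -
  assume le: "lk \<le> c + li"
  have "(e * 2 ^ c * (a mod 2 ^ li)) mod 2 ^ lk = (e * ((2 ^ c * (a mod 2 ^ li)) mod 2 ^ lk)) mod (2::int) ^ lk"
    by (simp add: mod_mult_right_eq mult.assoc)
  also have "\<dots> = (e * ((2 ^ c * a) mod 2 ^ lk)) mod (2::int) ^ lk"
    using cmod[OF le] by simp
  also have "\<dots> = (e * 2 ^ c * a) mod (2::int) ^ lk"
    by (simp add: mod_mult_right_eq mult.assoc)
  finally show ?thesis .
qed

lemma key_mod: "(lk::nat) \<le> c + li \<Longrightarrow>
  ((xk + yk) mod 2 ^ lk + e * 2 ^ c * ((xi + yi) mod 2 ^ li)) mod 2 ^ lk
     = ((xk + e * 2 ^ c * xi) mod 2 ^ lk + (yk + e * 2 ^ c * yi) mod 2 ^ lk) mod (2::int) ^ lk"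
proof -
  assume le: "lk \<le> c + li"
  have "((xk + yk) mod 2 ^ lk + e * 2 ^ c * ((xi + yi) mod 2 ^ li)) mod 2 ^ lk
     = ((xk + yk) + e * 2 ^ c * ((xi + yi) mod 2 ^ li)) mod (2::int) ^ lk"
    by (simp add: mod_add_left_eq)
  also have "\<dots> = ((xk + yk) + (e * 2 ^ c * ((xi + yi) mod 2 ^ li)) mod 2 ^ lk) mod (2::int) ^ lk"
    by (simp add: mod_add_right_eq)
  also have "\<dots> = ((xk + yk) + (e * 2 ^ c * (xi + yi)) mod 2 ^ lk) mod (2::int) ^ lk"
    by (simp only: cmod2[OF le])
  also have "\<dots> = ((xk + yk) + e * 2 ^ c * (xi + yi)) mod (2::int) ^ lk"
    by (simp add: mod_add_right_eq)
  also have "\<dots> = ((xk + e * 2 ^ c * xi) + (yk + e * 2 ^ c * yi)) mod (2::int) ^ lk"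
    by (simp add: algebra_simps)
  also have "\<dots> = ((xk + e * 2 ^ c * xi) mod 2 ^ lk + (yk + e * 2 ^ c * yi) mod 2 ^ lk) mod (2::int) ^ lk"
    by (simp add: mod_add_eq)
  finally show ?thesis .
qed

lemma shear_app: "g \<in> carrier (Gtuple n lam) \<Longrightarrow> j < n \<Longrightarrow>
  shear n lam k i e g j = (if j = k then (g k + e * 2 ^ (lam k - lam i) * g i) mod 2 ^ lam k else g j)"
  by (simp add: shear_def)

lemma shear_hom:
  assumes k: "k < n" and i: "i < n" and ik: "i \<noteq> k"
  shows "shear n lam k i e \<in> hom (Gtuple n lam) (Gtuple n lam)"
proof (rule homI)
  interpret group "Gtuple n lam" by (rule G_group)
  show "shear n lam k i e x \<in> carrier (Gtuple n lam)" if "x \<in> carrier (Gtuple n lam)" for x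
    using k that by (rule shear_carrier)
  fix x y assume x: "x \<in> carrier (Gtuple n lam)" and y: "y \<in> carrier (Gtuple n lam)"
  have xy: "x \<otimes>\<^bsub>Gtuple n lam\<^esub> y \<in> carrier (Gtuple n lam)" using x y by simp
  have sx: "shear n lam k i e x \<in> carrier (Gtuple n lam)" using k x by (rule shear_carrier)
  have sy: "shear n lam k i e y \<in> carrier (Gtuple n lam)" using k y by (rule shear_carrier)
  show "shear n lam k i e (x \<otimes>\<^bsub>Gtuple n lam\<^esub> y) = shear n lam k i e x \<otimes>\<^bsub>Gtuple n lam\<^esub> shear n lam k i e y"
  proof (rule G_eqI[OF shear_carrier[OF k xy]])
    show "shear n lam k i e x \<otimes>\<^bsub>Gtuple n lam\<^esub> shear n lam k i e y \<in> carrier (Gtuple n lam)"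
      using sx sy by simp
    fix j assume j: "j < n"
    have xyj: "(x \<otimes>\<^bsub>Gtuple n lam\<^esub> y) l = (x l + y l) mod 2 ^ lam l" if "l < n" for l
      using that by (simp add: G_mult)
    have r: "(shear n lam k i e x \<otimes>\<^bsub>Gtuple n lam\<^esub> shear n lam k i e y) j
        = (shear n lam k i e x j + shear n lam k i e y j) mod 2 ^ lam j"
      using j by (simp add: G_mult)
    show "shear n lam k i e (x \<otimes>\<^bsub>Gtuple n lam\<^esub> y) j = (shear n lam k i e x \<otimes>\<^bsub>Gtuple n lam\<^esub> shear n lam k i e y) j"
    proof (cases "j = k")
      case True
      have "shear n lam k i e (x \<otimes>\<^bsub>Gtuple n lam\<^esub> y) j =
         ((x k + y k) mod 2 ^ lam k + e * 2 ^ (lam k - lam i) * ((x i + y i) mod 2 ^ lam i)) mod 2 ^ lam k"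
        using True shear_app[OF xy j] xyj[OF k] xyj[OF i] by simp
      also have "\<dots> = ((x k + e * 2 ^ (lam k - lam i) * x i) mod 2 ^ lam k + (y k + e * 2 ^ (lam k - lam i) * y i) mod 2 ^ lam k) mod 2 ^ lam k"
        by (rule key_mod) simp
      also have "\<dots> = (shear n lam k i e x \<otimes>\<^bsub>Gtuple n lam\<^esub> shear n lam k i e y) j"
        unfolding r using True shear_app[OF x j] shear_app[OF y j] by simp
      finally show ?thesis .
    next
      case False
      then show ?thesis unfolding r using shear_app[OF xy j] shear_app[OF x j] shear_app[OF y j] xyj[OF j] by simp
    qed
  qed
qed

lemma shear_inv:
  assumes k: "k < n" and i: "i < n" and ik: "i \<noteq> k" and g: "g \<in> carrier (Gtuple n lam)"
  shows "shear n lam k i (- e) (shear n lam k i e g) = g"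
proof -
  have sc: "shear n lam k i e g \<in> carrier (Gtuple n lam)" using k g by (rule shear_carrier)
  have s1: "shear n lam k i e g j = (if j = k then (g k + e * 2 ^ (lam k - lam i) * g i) mod 2 ^ lam k else g j)"
    if "j < n" for j using g that by (simp add: shear_def)
  show ?thesis
  proof (rule G_eqI[OF shear_carrier[OF k sc] g])
    fix j assume j: "j < n"
    have "shear n lam k i (- e) (shear n lam k i e g) j =
      (if j = k then (shear n lam k i e g k + (- e) * 2 ^ (lam k - lam i) * shear n lam k i e g i) mod 2 ^ lam k
       else shear n lam k i e g j)"
      using sc j by (simp add: shear_def)
    also have "\<dots> = g j"
    proof (cases "j = k")
      case True
      have "((g k + e * 2 ^ (lam k - lam i) * g i) mod 2 ^ lam k + (- e) * 2 ^ (lam k - lam i) * g i) mod 2 ^ lam k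
          = (g k + e * 2 ^ (lam k - lam i) * g i + (- e) * 2 ^ (lam k - lam i) * g i) mod 2 ^ lam k"
        by (simp add: mod_diff_left_eq)
      also have "\<dots> = g k" using G_mod[OF g k] by simp
      finally show ?thesis using True s1[OF k] s1[OF i] ik by simp
    next
      case False then show ?thesis using s1[OF j] by simp
    qed
    finally show "shear n lam k i (- e) (shear n lam k i e g) j = g j" .
  qed
qed

lemma shear_auto:
  assumes k: "k < n" and i: "i < n" and ik: "i \<noteq> k"
  shows "shear n lam k i e \<in> auto (Gtuple n lam)"
  unfolding auto_def Bij_def
proof (intro IntI CollectI shear_hom[OF k i ik])
  show "shear n lam k i e \<in> extensional (carrier (Gtuple n lam))"
    by (simp add: shear_def)
  have i1: "\<forall>a\<in>carrier (Gtuple n lam). shear n lam k i (- e) (shear n lam k i e a) = a"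
    using shear_inv[OF k i ik] by blast
  have i2: "\<forall>a\<in>carrier (Gtuple n lam). shear n lam k i e (shear n lam k i (- e) a) = a"
    using shear_inv[OF k i ik, of _ lam "- e"] by simp
  show "bij_betw (shear n lam k i e) (carrier (Gtuple n lam)) (carrier (Gtuple n lam))"
    by (rule bij_betw_byWitness[where f'="shear n lam k i (- e)"]) (use i1 i2 in \<open>auto intro: shear_carrier[OF k]\<close>)
qed




lemma sub_pow: "subgroup H (Gtuple n lam) \<Longrightarrow> x \<in> H \<Longrightarrow> x [^]\<^bsub>Gtuple n lam\<^esub> (k::nat) \<in> H"
proof (induction k)
  case 0 then show ?case by (simp add: subgroup.one_closed)
next
  case (Suc k) then show ?case by (simp add: subgroup.m_closed)
qed

lemma theta:
  assumes H: "characteristic H (Gtuple n lam)" and k: "k < n" and i: "i < n" and ik: "i \<noteq> k"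
    and h: "h \<in> H"
  shows "sg n k ((2 ^ (lam k - lam i) * h i) mod 2 ^ lam k) \<in> H"
proof -
  interpret group "Gtuple n lam" by (rule G_group)
  have sub: "subgroup H (Gtuple n lam)" using H by (simp add: characteristic_def)
  have hc: "h \<in> carrier (Gtuple n lam)" using sub h subgroup.subset by blast
  have "shear n lam k i 1 ` H = H" using H shear_auto[OF k i ik] by (simp add: characteristic_def)
  then have a: "shear n lam k i 1 h \<in> H" using h by blast
  have b: "inv\<^bsub>Gtuple n lam\<^esub> h \<in> H" using sub h by (rule subgroup.m_inv_closed)
  have m: "shear n lam k i 1 h \<otimes>\<^bsub>Gtuple n lam\<^esub> inv\<^bsub>Gtuple n lam\<^esub> h \<in> H"
    using sub a b by (rule subgroup.m_closed)
  have sc: "shear n lam k i 1 h \<in> carrier (Gtuple n lam)" using k hc by (rule shear_carrier)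
  have "shear n lam k i 1 h \<otimes>\<^bsub>Gtuple n lam\<^esub> inv\<^bsub>Gtuple n lam\<^esub> h = sg n k ((2 ^ (lam k - lam i) * h i) mod 2 ^ lam k)"
  proof (rule G_eqI)
    show "shear n lam k i 1 h \<otimes>\<^bsub>Gtuple n lam\<^esub> inv\<^bsub>Gtuple n lam\<^esub> h \<in> carrier (Gtuple n lam)"
      using sc hc by simp
    show "sg n k ((2 ^ (lam k - lam i) * h i) mod 2 ^ lam k) \<in> carrier (Gtuple n lam)"
      by (rule sg_carrier) simp_all
    fix j assume j: "j < n"
    have e: "(shear n lam k i 1 h \<otimes>\<^bsub>Gtuple n lam\<^esub> inv\<^bsub>Gtuple n lam\<^esub> h) j
       = (shear n lam k i 1 h j + (- h j) mod 2 ^ lam j) mod 2 ^ lam j"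
      using j by (simp add: G_mult G_inv[OF hc])
    show "(shear n lam k i 1 h \<otimes>\<^bsub>Gtuple n lam\<^esub> inv\<^bsub>Gtuple n lam\<^esub> h) j = sg n k ((2 ^ (lam k - lam i) * h i) mod 2 ^ lam k) j"
    proof (cases "j = k")
      case True
      have "(shear n lam k i 1 h j + (- h j) mod 2 ^ lam j) mod 2 ^ lam j
          = ((h k + 2 ^ (lam k - lam i) * h i) mod 2 ^ lam k + (- h k) mod 2 ^ lam k) mod 2 ^ lam k"
        using True shear_app[OF hc j] by simp
      also have "\<dots> = (h k + 2 ^ (lam k - lam i) * h i + (- h k)) mod 2 ^ lam k"
        by (simp add: mod_add_eq)
      also have "\<dots> = (2 ^ (lam k - lam i) * h i) mod 2 ^ lam k" by simp
      finally show ?thesis using e True j by (simp add: sg_def)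
    next
      case False
      have "(shear n lam k i 1 h j + (- h j) mod 2 ^ lam j) mod 2 ^ lam j
          = (h j + (- h j) mod 2 ^ lam j) mod 2 ^ lam j"
        using False shear_app[OF hc j] by simp
      also have "\<dots> = (h j + (- h j)) mod 2 ^ lam j" by (simp add: mod_add_right_eq)
      also have "\<dots> = 0" by simp
      finally show ?thesis using e False j by (simp add: sg_def)
    qed
  qed
  then show ?thesis using m by simp
qed

lemma ex_odd: "0 < (x::int) \<Longrightarrow> \<exists>s u. x = 2 ^ s * u \<and> odd u"
proof (induction "nat x" arbitrary: x rule: less_induct)
  case less
  show ?case
  proof (cases "odd x")
    case True then show ?thesis by (intro exI[of _ 0] exI[of _ x]) simp
  next
    case False then obtain y where y: "x = 2 * y" by (auto elim: evenE)
    then have "0 < y" "nat y < nat x" using less.prems by auto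
    then obtain s u where "y = 2 ^ s * u" "odd u" using less.hyps by blast
    then show ?thesis using y by (intro exI[of _ "Suc s"] exI[of _ u]) simp
  qed
qed

lemma mult_in:
  assumes H: "subgroup H (Gtuple n lam)" and i: "i < n"
    and z: "0 \<le> z" "z < 2 ^ lam i" and y: "0 \<le> y" "y < 2 ^ lam i"
    and zH: "sg n i z \<in> H" and ok: "\<And>t. Ok lam i t z \<Longrightarrow> Ok lam i t y"
  shows "sg n i y \<in> H"
proof (cases "z = 0")
  case True
  then have "Ok lam i 0 y" using ok by simp
  then have "y = 0" using Ok_zero_iff y by blast
  then show ?thesis using H by (simp add: sg_zero[of n i lam] subgroup.one_closed)
next
  case False
  then have "0 < z" using z by simp
  then obtain s u where su: "z = 2 ^ s * u" "odd u" using ex_odd by blast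
  have "0 < u" using su \<open>0 < z\<close> by (simp add: zero_less_mult_iff)
  then have "(2::int) ^ s \<le> z" using su by simp
  then have "(2::int) ^ s < 2 ^ lam i" using z by linarith
  then have sl: "s < lam i" using power_strict_increasing_iff[of "2::int" s "lam i"] by simp
  have pw: "(2::int) ^ (lam i - s) * 2 ^ s = 2 ^ lam i" using sl by (simp flip: power_add)
  have "Ok lam i (lam i - s) z"
    unfolding Ok_def su using pw by (metis dvd_triv_left mult.assoc)
  then have "Ok lam i (lam i - s) y" by (rule ok)
  then have "(2::int) ^ (lam i - s) * 2 ^ s dvd 2 ^ (lam i - s) * y"
    unfolding Ok_def pw .
  then have "(2::int) ^ s dvd y" by simp
  then obtain w where w: "y = 2 ^ s * w" by (rule dvdE)
  have "coprime u 2" using su(2) by simp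
  then have "coprime u ((2::int) ^ lam i)" by simp
  then have "gcd u ((2::int) ^ lam i) = 1" by simp
  then obtain a b where ab: "a * u + b * 2 ^ lam i = (1::int)" using bezout_int by metis
  define k where "k = w * a"
  have "k * z = y - 2 ^ lam i * (b * y)"
  proof -
    have "k * z = 2 ^ s * w * (a * u)" by (simp add: k_def su algebra_simps)
    also have "\<dots> = 2 ^ s * w * (1 - b * 2 ^ lam i)"
    proof -
      have "a * u = 1 - b * 2 ^ lam i" using ab by linarith
      then show ?thesis by simp
    qed
    also have "\<dots> = y - 2 ^ lam i * (b * y)" by (simp add: w algebra_simps)
    finally show ?thesis .
  qed
  then have e: "k * z = y + 2 ^ lam i * (- (b * y))" by simp
  have "(k * z) mod 2 ^ lam i = y mod 2 ^ lam i" unfolding e by (metis mod_mult_self1 mod_mult_self2)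
  then have kz: "(k * z) mod 2 ^ lam i = y" using y by simp
  define k' where "k' = nat (k mod 2 ^ lam i)"
  have "(int k' * z) mod 2 ^ lam i = ((k mod 2 ^ lam i) * z) mod 2 ^ lam i" by (simp add: k'_def)
  also have "\<dots> = y" using kz by (simp add: mod_mult_left_eq)
  finally have "sg n i z [^]\<^bsub>Gtuple n lam\<^esub> k' = sg n i y" using z by (simp add: sg_pow)
  then show ?thesis using sub_pow[OF H zH, of k'] by simp
qed


lemma compl_in:
  assumes H: "subgroup H (Gtuple n lam)" and i: "i < n" and v: "v \<in> H"
    and others: "\<And>k. k < n \<Longrightarrow> k \<noteq> i \<Longrightarrow> sg n k (v k) \<in> H"
  shows "sg n i (v i) \<in> H"
proof -
  interpret group "Gtuple n lam" by (rule G_group)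
  have vc: "v \<in> carrier (Gtuple n lam)" using H v subgroup.subset by blast
  define v' where "v' = (\<lambda>j\<in>{0..<n}. if j = i then 0 else v j)"
  have v'c: "v' \<in> carrier (Gtuple n lam)" unfolding v'_def
    by (rule G_carrierI) (simp add: G_carrierD[OF vc])
  have v'H: "v' \<in> H"
  proof (rule decomp[OF v'c H])
    fix p assume p: "p < n"
    show "sg n p (v' p) \<in> H"
    proof (cases "p = i")
      case True
      then have "sg n p (v' p) = \<one>\<^bsub>Gtuple n lam\<^esub>" using p by (simp add: v'_def sg_zero[of n i lam])
      then show ?thesis using H by (simp add: subgroup.one_closed)
    next
      case False then show ?thesis using others[OF p] p by (simp add: v'_def)
    qed
  qed
  have m: "inv\<^bsub>Gtuple n lam\<^esub> v' \<otimes>\<^bsub>Gtuple n lam\<^esub> v \<in> H"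
    using H v'H v by (simp add: subgroup.m_closed subgroup.m_inv_closed)
  have "sg n i (v i) = inv\<^bsub>Gtuple n lam\<^esub> v' \<otimes>\<^bsub>Gtuple n lam\<^esub> v"
  proof (rule G_eqI)
    show "sg n i (v i) \<in> carrier (Gtuple n lam)" using G_carrierD[OF vc i] by (intro sg_carrier) auto
    show "inv\<^bsub>Gtuple n lam\<^esub> v' \<otimes>\<^bsub>Gtuple n lam\<^esub> v \<in> carrier (Gtuple n lam)"
      using v'c vc by simp
    fix j assume j: "j < n"
    have e: "(inv\<^bsub>Gtuple n lam\<^esub> v' \<otimes>\<^bsub>Gtuple n lam\<^esub> v) j = ((- v' j) mod 2 ^ lam j + v j) mod 2 ^ lam j"
      using j by (simp add: G_mult G_inv[OF v'c])
    show "sg n i (v i) j = (inv\<^bsub>Gtuple n lam\<^esub> v' \<otimes>\<^bsub>Gtuple n lam\<^esub> v) j"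
    proof (cases "j = i")
      case True then show ?thesis using e j G_mod[OF vc j] by (simp add: sg_def v'_def)
    next
      case False
      have "((- v j) mod 2 ^ lam j + v j) mod 2 ^ lam j = (- v j + v j) mod 2 ^ lam j"
        by (simp add: mod_add_left_eq)
      then show ?thesis using e j False by (simp add: sg_def v'_def)
    qed
  qed
  then show ?thesis using m by simp
qed

lemma closed_regular:
  assumes H: "subgroup H (Gtuple n lam)"
    and cl: "\<And>i h. i < n \<Longrightarrow> h \<in> H \<Longrightarrow> sg n i (h i) \<in> H"
  shows "\<exists>a. H = low n lam a"
proof -
  define a where "a i = (LEAST t. \<forall>h\<in>H. Ok lam i t (h i))" for i
  have aok: "\<forall>h\<in>H. Ok lam i (a i) (h i)" for i
    unfolding a_def by (rule LeastI[of _ "lam i"]) (simp add: Ok_big)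
  have Hc: "H \<subseteq> carrier (Gtuple n lam)" using H by (rule subgroup.subset)
  show ?thesis
  proof (intro exI equalityI subsetI)
    fix h assume "h \<in> H"
    then show "h \<in> low n lam a" using Hc aok by (auto simp: low_def)
  next
    fix g assume g: "g \<in> low n lam a"
    then have gc: "g \<in> carrier (Gtuple n lam)" by (simp add: low_def)
    show "g \<in> H"
    proof (rule decomp[OF gc H])
      fix p assume p: "p < n"
      have gp: "Ok lam p (a p) (g p)" using g p by (simp add: low_def)
      show "sg n p (g p) \<in> H"
      proof (cases "a p = 0")
        case True
        then have "g p = 0" using gp Ok_zero_iff G_carrierD[OF gc p] by auto
        then show ?thesis using H by (simp add: sg_zero[of n p lam] subgroup.one_closed)
      next
        case False
        then have "\<not> (\<forall>h\<in>H. Ok lam p (a p - 1) (h p))"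
          using not_less_Least[of "a p - 1" "\<lambda>t. \<forall>h\<in>H. Ok lam p t (h p)"] unfolding a_def[symmetric]
          by simp
        then obtain h where h: "h \<in> H" "\<not> Ok lam p (a p - 1) (h p)" by blast
        have hc: "h \<in> carrier (Gtuple n lam)" using h Hc by blast
        show ?thesis
        proof (rule mult_in[OF H p _ _ _ _ cl[OF p h(1)]])
          show "0 \<le> h p" "h p < 2 ^ lam p" using G_carrierD[OF hc p] by auto
          show "0 \<le> g p" "g p < 2 ^ lam p" using G_carrierD[OF gc p] by auto
          fix t assume t: "Ok lam p t (h p)"
          have "a p \<le> t"
          proof (rule ccontr)
            assume "\<not> a p \<le> t"
            then have "t \<le> a p - 1" by simp
            then show False using Ok_mono[OF t] h(2) by blast
          qed
          then show "Ok lam p t (g p)" using Ok_mono[OF gp] by blast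
        qed
      qed
    qed
  qed
qed

lemma Ok_shift:
  assumes "Ok lam i t ((2 ^ (lam i - lam j) * x) mod 2 ^ lam i)"
  shows "Ok lam j (t + (lam j - lam i)) x"
proof -
  have d: "(2::int) ^ lam i dvd 2 ^ t * (2 ^ (lam i - lam j) * x)"
    using assms unfolding Ok_mod by (simp add: Ok_def)
  show ?thesis
  proof (cases "lam j \<le> lam i")
    case True
    have "(2::int) ^ lam i = 2 ^ (lam i - lam j) * 2 ^ lam j" using True by (simp flip: power_add)
    moreover have "(2::int) ^ t * (2 ^ (lam i - lam j) * x) = 2 ^ (lam i - lam j) * (2 ^ t * x)" by simp
    ultimately have "(2::int) ^ (lam i - lam j) * 2 ^ lam j dvd 2 ^ (lam i - lam j) * (2 ^ t * x)"
      using d by simp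
    then have "(2::int) ^ lam j dvd 2 ^ t * x" by simp
    then show ?thesis using True by (simp add: Ok_def)
  next
    case False
    then have d': "(2::int) ^ lam i dvd 2 ^ t * x" using d by simp
    have "(2::int) ^ (lam j - lam i) * 2 ^ lam i dvd 2 ^ (lam j - lam i) * (2 ^ t * x)"
      using d' by (rule mult_dvd_mono[OF dvd_refl])
    moreover have "(2::int) ^ (lam j - lam i) * 2 ^ lam i = 2 ^ lam j" using False by (simp flip: power_add)
    moreover have "(2::int) ^ (lam j - lam i) * (2 ^ t * x) = 2 ^ (t + (lam j - lam i)) * x"
      by (simp add: power_add)
    ultimately show ?thesis by (simp add: Ok_def)
  qed
qed




lemma dir_distrib_regular:
  assumes D: "char_lattice_distributive (Gtuple n lam)" and H: "characteristic H (Gtuple n lam)"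
  shows "regular_subgroup n lam H"
proof (rule ccontr)
  interpret group "Gtuple n lam" by (rule G_group)
  assume nreg: "\<not> regular_subgroup n lam H"
  have Hs: "subgroup H (Gtuple n lam)" using H by (simp add: characteristic_def)
  have Hc: "H \<subseteq> carrier (Gtuple n lam)" using Hs by (rule subgroup.subset)
  obtain i hs where i: "i < n" and hs: "hs \<in> H" and nin: "sg n i (hs i) \<notin> H"
    using closed_regular[OF Hs] nreg regular_iff by blast
  have hc: "hs \<in> carrier (Gtuple n lam)" using hs Hc by blast
  define m where "m = (LEAST t. Ok lam i t (hs i))"
  have Okm: "Ok lam i m (hs i)" unfolding m_def by (rule LeastI[of _ "lam i"]) (simp add: Ok_big)
  have mmin: "m \<le> t" if "Ok lam i t (hs i)" for t unfolding m_def using that by (rule Least_le)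
  have m1: "1 \<le> m"
  proof (rule ccontr)
    assume "\<not> 1 \<le> m"
    then have "m = 0" by simp
    then have "hs i = 0" using Okm Ok_zero_iff G_carrierD[OF hc i] by auto
    then show False using nin Hs by (simp add: sg_zero[of n i lam] subgroup.one_closed)
  qed
  have K: False if z: "0 \<le> z" "z < 2 ^ lam i" and zH: "sg n i z \<in> H" and nz: "\<not> Ok lam i (m - 1) z" for z
  proof -
    have "sg n i (hs i) \<in> H"
    proof (rule mult_in[OF Hs i z _ _ zH])
      show "0 \<le> hs i" "hs i < 2 ^ lam i" using G_carrierD[OF hc i] by auto
      fix t assume t: "Ok lam i t z"
      have "m \<le> t"
      proof (rule ccontr)
        assume "\<not> m \<le> t"
        then have "t \<le> m - 1" by simp
        then show False using Ok_mono[OF t] nz by blast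
      qed
      then show "Ok lam i t (hs i)" using Ok_mono[OF Okm] by blast
    qed
    then show False using nin by blast
  qed
  define f where "f j = (LEAST t. Ok lam j t (hs j))" for j
  have Okf: "Ok lam j (f j) (hs j)" for j unfolding f_def by (rule LeastI[of _ "lam j"]) (simp add: Ok_big)
  have fmin: "f j \<le> t" if "Ok lam j t (hs j)" for j t unfolding f_def using that by (rule Least_le)
  define S where "S k = (\<lambda>j. f j - (lam j - lam k)) ` {j. j < n \<and> j \<noteq> i}" for k
  have finS: "finite (insert 0 (S k))" for k unfolding S_def by simp
  define e where "e k = Max (insert 0 (S k))" for k
  define c where "c k = m - (lam i - lam k)" for k
  have e_ge: "f j - (lam j - lam k) \<le> e k" if "j < n" "j \<noteq> i" for j k
    unfolding e_def using finS[of k] that by (intro Max_ge) (auto simp: S_def)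
  have good_c: "good n lam c" unfolding good_def c_def by arith
  have good_e: "good n lam e" unfolding good_def
  proof (intro allI impI)
    fix j k assume j: "j < n" and k: "k < n"
    have all: "\<forall>x\<in>insert 0 (S j). x \<le> e k + (lam j - lam k)"
    proof
      fix x assume "x \<in> insert 0 (S j)"
      then consider "x = 0" | "x \<in> S j" by blast
      then show "x \<le> e k + (lam j - lam k)"
      proof cases
        case 1 then show ?thesis by simp
      next
        case 2
        then obtain l where l: "l < n" "l \<noteq> i" "x = f l - (lam l - lam j)" unfolding S_def by blast
        have "f l - (lam l - lam k) \<le> e k" using e_ge[OF l(1,2)] .
        then show ?thesis using l(3) by arith
      qed
    qed
    have "e j \<le> e k + (lam j - lam k)"
      unfolding e_def[of j] using Max_le_iff[OF finS[of j]] all by blast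
    then show "e j - (lam j - lam k) \<le> e k" by arith
  qed
  have ei_all: "\<forall>x\<in>insert 0 (S i). x \<le> m - 1"
  proof
    fix x assume "x \<in> insert 0 (S i)"
    then consider "x = 0" | "x \<in> S i" by blast
    then show "x \<le> m - 1"
    proof cases
      case 1 then show ?thesis by simp
    next
      case 2
      then obtain j where j: "j < n" "j \<noteq> i" "x = f j - (lam j - lam i)" unfolding S_def by blast
      show "x \<le> m - 1"
      proof (rule ccontr)
        assume big: "\<not> x \<le> m - 1"
        have zH: "sg n i ((2 ^ (lam i - lam j) * hs j) mod 2 ^ lam i) \<in> H"
          using theta[OF H i j(1) j(2) hs] .
        have "\<not> Ok lam i (m - 1) ((2 ^ (lam i - lam j) * hs j) mod 2 ^ lam i)"
        proof
          assume "Ok lam i (m - 1) ((2 ^ (lam i - lam j) * hs j) mod 2 ^ lam i)"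
          then have "Ok lam j (m - 1 + (lam j - lam i)) (hs j)" by (rule Ok_shift)
          then have "f j \<le> m - 1 + (lam j - lam i)" by (rule fmin)
          then show False using big j(3) by arith
        qed
        then show False using K[OF _ _ zH] by simp
      qed
    qed
  qed
  have ei: "e i \<le> m - 1"
    unfolding e_def[of i] using Max_le_iff[OF finS[of i]] ei_all by blast
  have hs_low: "hs \<in> low n lam (\<lambda>k. max (e k) (c k))"
    unfolding low_def
  proof (intro CollectI conjI hc allI impI)
    fix k assume k: "k < n"
    show "Ok lam k (max (e k) (c k)) (hs k)"
    proof (cases "k = i")
      case True then show ?thesis using Okm by (intro Ok_max) (simp add: c_def)
    next
      case False
      have "f k \<le> e k" using e_ge[OF k False, of k] by simp
      then have "Ok lam k (e k) (hs k)" using Ok_mono[OF Okf] by blast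
      then show ?thesis by (intro Ok_max) simp
    qed
  qed
  have "hs \<in> H \<inter> generate (Gtuple n lam) (low n lam e \<union> low n lam c)"
    using hs hs_low by (simp add: gen_low)
  moreover have "H \<inter> generate (Gtuple n lam) (low n lam e \<union> low n lam c)
      = generate (Gtuple n lam) (H \<inter> low n lam e \<union> H \<inter> low n lam c)"
    using D H low_char[OF good_e] low_char[OF good_c] unfolding char_lattice_distributive_def by blast
  moreover have "generate (Gtuple n lam) (H \<inter> low n lam e \<union> H \<inter> low n lam c) \<subseteq>
          {x. \<exists>u\<in>H \<inter> low n lam e. \<exists>v\<in>H \<inter> low n lam c. x = u \<otimes>\<^bsub>Gtuple n lam\<^esub> v}"
    by (rule gen_sub) (simp_all add: subgroups_Inter_pair Hs low_subgroup)
  ultimately obtain u v where u: "u \<in> H" "u \<in> low n lam e" and v: "v \<in> H" "v \<in> low n lam c"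
     and huv: "hs = u \<otimes>\<^bsub>Gtuple n lam\<^esub> v" by blast
  have uc: "u \<in> carrier (Gtuple n lam)" and vc: "v \<in> carrier (Gtuple n lam)"
    using u v by (simp_all add: low_def)
  have hsi: "hs i = (u i + v i) mod 2 ^ lam i" using huv i by (simp add: G_mult)
  have ui: "Ok lam i (m - 1) (u i)"
    using u(2) i ei Ok_mono by (simp add: low_def) blast
  have vi: "\<not> Ok lam i (m - 1) (v i)"
  proof
    assume "Ok lam i (m - 1) (v i)"
    then have "Ok lam i (m - 1) (hs i)" unfolding hsi Ok_mod using ui by (simp add: Ok_add)
    then have "m \<le> m - 1" by (rule mmin)
    then show False using m1 by simp
  qed
  have vk: "sg n k (v k) \<in> H" if k: "k < n" "k \<noteq> i" for k
  proof (rule mult_in[OF Hs k(1) _ _ _ _ theta[OF H k(1) i k(2)[symmetric] v(1)]])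
    show "0 \<le> (2 ^ (lam k - lam i) * v i) mod 2 ^ lam k" "(2 ^ (lam k - lam i) * v i) mod 2 ^ lam k < 2 ^ lam k"
      by simp_all
    show "0 \<le> v k" "v k < 2 ^ lam k" using G_carrierD[OF vc k(1)] by auto
    fix t assume t: "Ok lam k t ((2 ^ (lam k - lam i) * v i) mod 2 ^ lam k)"
    have t2: "Ok lam i (t + (lam i - lam k)) (v i)" using t by (rule Ok_shift)
    have "m \<le> t + (lam i - lam k)"
    proof (rule ccontr)
      assume "\<not> m \<le> t + (lam i - lam k)"
      then have "t + (lam i - lam k) \<le> m - 1" by simp
      then show False using Ok_mono[OF t2] vi by blast
    qed
    then have "c k \<le> t" unfolding c_def by arith
    moreover have "Ok lam k (c k) (v k)" using v(2) k by (simp add: low_def)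
    ultimately show "Ok lam k t (v k)" using Ok_mono by blast
  qed
  have "sg n i (v i) \<in> H" using compl_in[OF Hs i v(1) vk] by blast
  then show False using K[of "v i"] vi G_carrierD[OF vc i] by auto
qed


theorem mainTheorem11:
  fixes n :: nat and lam :: "nat \<Rightarrow> nat"
  assumes "\<And>i j. i \<le> j \<Longrightarrow> j < n \<Longrightarrow> lam i \<le> lam j"
  shows "char_lattice_distributive (Gtuple n lam) \<longleftrightarrow>
         (\<forall>H. characteristic H (Gtuple n lam) \<longrightarrow> regular_subgroup n lam H)"
proof
  assume "char_lattice_distributive (Gtuple n lam)"
  then show "\<forall>H. characteristic H (Gtuple n lam) \<longrightarrow> regular_subgroup n lam H"
    using dir_distrib_regular by blast
next
  assume "\<forall>H. characteristic H (Gtuple n lam) \<longrightarrow> regular_subgroup n lam H"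
  then show "char_lattice_distributive (Gtuple n lam)" by (rule dir_regular_distrib)
qed

end
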